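(* There is an absolute constant $C>0$ such that the following holds. Let $R>0$ and let $r\ge 1$ be an integer; set $d=r$. Let $\Omega_1=(-1-d,\,R+d)$, let $\chi_{\Omega_1}$ be its indicator function, let $\eta_d(p)=d^{-1}\eta(p/d)$, and define the cut-off function $\zeta=\eta_d*\chi_{\Omega_1}$, i.e. $\zeta(p)=\int_{\mathbb{R}}\eta_d(p-y)\chi_{\Omega_1}(y)\,\mathrm{d}y$. Define $\psi(p)=\zeta(p)\mathrm{e}^{-p}$. Then $\psi\in C^\infty(\mathbb{R})$, $\operatorname{supp}\psi\subset[-(1+2r),\,R+2r]$, $\psi(p)=\mathrm{e}^{-p}$ for $p\in(-1,R)$, and \[ \|\psi^{(r)}\|_{L^2(\mathbb{R})}^{1/r}\le C\, r^2 . \] In particular, choosing $r\simeq\log(1/\epsilon)$ gives $\|\psi^{(r)}\|_{L^2(\mathbb{R})}^{1/r}\lesssim \log^2(1/\epsilon)$.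
   Context: $\eta$ is the mollifier $\eta(p)=C_\eta^{-1}\exp(1/(p^2-1))$ for $|p|<1$ and $\eta(p)=0$ for $|p|\ge1$, with $C_\eta=\int_{-1}^1\exp(1/(p^2-1))\,\mathrm{d}p$. $\psi^{(r)}$ is the $r$-th derivative of $\psi$. *)

theory Defs
  imports "HOL-Analysis.Analysis"
begin

definition C_eta :: real where
  "C_eta = integral {-1..1} (\<lambda>p. exp (1 / (p^2 - 1)))"

definition eta :: "real \<Rightarrow> real" where
  "eta p = (if \<bar>p\<bar> < 1 then exp (1 / (p^2 - 1)) / C_eta else 0)"

definition eta_d :: "real \<Rightarrow> real \<Rightarrow> real" where
  "eta_d d p = eta (p / d) / d"

definition zeta :: "real \<Rightarrow> real \<Rightarrow> real \<Rightarrow> real" where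
  "zeta R d p = integral UNIV (\<lambda>y. eta_d d (p - y) * indicator {-1-d<..<R+d} y)"

definition psi :: "real \<Rightarrow> nat \<Rightarrow> real \<Rightarrow> real" where
  "psi R r p = zeta R (real r) p * exp (- p)"

definition smooth_real :: "(real \<Rightarrow> real) \<Rightarrow> bool" where
  "smooth_real f \<longleftrightarrow> (\<forall>k x. ((deriv ^^ k) f) differentiable (at x))"

definition supp_real :: "(real \<Rightarrow> real) \<Rightarrow> real set" where
  "supp_real f = closure {p. f p \<noteq> 0}"

end

theory Submission
  imports Defs "HOL-Complex_Analysis.Complex_Analysis"
begin

definition dseq :: "(nat \<Rightarrow> real \<Rightarrow> real) \<Rightarrow> bool" where
  "dseq F \<longleftrightarrow> (\<forall>k x. (F k has_real_derivative F (Suc k) x) (at x))"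

lemma dseqD: "dseq F \<Longrightarrow> (F k has_real_derivative F (Suc k) x) (at x)"
  by (simp add: dseq_def)

lemma dseq_deriv: assumes "dseq F" shows "(deriv ^^ k) (F 0) = F k"
proof (induction k)
  case 0 then show ?case by simp
next
  case (Suc k)
  have "(deriv ^^ Suc k) (F 0) = deriv (F k)" using Suc by simp
  also have "\<dots> = F (Suc k)"
    by (rule ext, rule DERIV_imp_deriv, rule dseqD[OF assms])
  finally show ?case .
qed

lemma dseq_smooth: assumes "dseq F" shows "smooth_real (F 0)"
  unfolding smooth_real_def dseq_deriv[OF assms]
  using dseqD[OF assms] real_differentiable_def by blast

lemma dseq_cont: assumes "dseq F" shows "continuous_on S (F k)"
  using dseqD[OF assms] by (meson DERIV_isCont continuous_at_imp_continuous_on)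

lemma dseq_diff: "dseq F \<Longrightarrow> dseq G \<Longrightarrow> dseq (\<lambda>k x. F k x - G k x)"
  unfolding dseq_def by (auto intro!: derivative_eq_intros)

lemma dseq_cmult: "dseq F \<Longrightarrow> dseq (\<lambda>k x. c * F k x)"
  unfolding dseq_def by (auto intro!: derivative_eq_intros)

lemma dseq_affine: assumes "dseq F" shows "dseq (\<lambda>k x. a ^ k * F k (a * x + b))"
  unfolding dseq_def
proof (intro allI)
  fix k x
  have "((\<lambda>x. F k (a * x + b)) has_real_derivative F (Suc k) (a*x+b) * a) (at x)"
    by (rule DERIV_chain2[OF dseqD[OF assms]]) (auto intro!: derivative_eq_intros)
  then show "((\<lambda>x. a ^ k * F k (a * x + b)) has_real_derivative a ^ Suc k * F (Suc k) (a * x + b)) (at x)"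
    by (auto intro!: derivative_eq_intros simp: algebra_simps)
qed

lemma dseq_cons: assumes "\<And>x. (f has_real_derivative F 0 x) (at x)" "dseq F"
  shows "dseq (\<lambda>k. case k of 0 \<Rightarrow> f | Suc j \<Rightarrow> F j)"
  unfolding dseq_def using assms dseqD[OF assms(2)] by (auto split: nat.splits)

lemma dseq_expneg: "dseq (\<lambda>k x. (-1)^k * exp (- x))"
  unfolding dseq_def by (auto intro!: derivative_eq_intros)

lemma leibniz_sum:
  fixes a b :: "nat \<Rightarrow> real"
  shows "(\<Sum>k\<le>n. real (n choose k) * (a (Suc k) * b (n - k) + a k * b (Suc (n - k))))
       = (\<Sum>k\<le>Suc n. real (Suc n choose k) * a k * b (Suc n - k))"
proof -
  have 1: "(\<Sum>k\<le>Suc n. real (Suc n choose k) * a k * b (Suc n - k))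
      = a 0 * b (Suc n) + (\<Sum>k\<le>n. real (Suc n choose Suc k) * a (Suc k) * b (n - k))"
    by (subst sum.atMost_Suc_shift) simp
  have 2: "(\<Sum>k\<le>n. real (Suc n choose Suc k) * a (Suc k) * b (n - k)) = (\<Sum>k\<le>n. real (n choose k) * a (Suc k) * b (n - k))
        + (\<Sum>k\<le>n. real (n choose Suc k) * a (Suc k) * b (n - k))"
    by (simp add: sum.distrib algebra_simps)
  have 3: "a 0 * b (Suc n) + (\<Sum>k\<le>n. real (n choose Suc k) * a (Suc k) * b (n - k))
      = (\<Sum>k\<le>Suc n. real (n choose k) * a k * b (Suc n - k))"
    by (subst sum.atMost_Suc_shift) simp
  have 4: "(\<Sum>k\<le>Suc n. real (n choose k) * a k * b (Suc n - k)) = (\<Sum>k\<le>n. real (n choose k) * a k * b (Suc (n - k)))"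
    by (simp add: Suc_diff_le)
  show ?thesis using 1 2 3 4 by (simp add: sum.distrib algebra_simps)
qed

lemma dseq_mult: assumes F: "dseq F" and G: "dseq G"
  shows "dseq (\<lambda>n x. \<Sum>k\<le>n. real (n choose k) * F k x * G (n - k) x)"
  unfolding dseq_def
proof (intro allI)
  fix n x
  have "((\<lambda>x. \<Sum>k\<le>n. real (n choose k) * F k x * G (n - k) x) has_real_derivative
     (\<Sum>k\<le>n. real (n choose k) * (F (Suc k) x * G (n - k) x + F k x * G (Suc (n - k)) x))) (at x)"
    by (rule DERIV_sum) (auto intro!: derivative_eq_intros dseqD[OF F] dseqD[OF G] simp: algebra_simps)
  then show "((\<lambda>x. \<Sum>k\<le>n. real (n choose k) * F k x * G (n - k) x) has_real_derivative
     (\<Sum>k\<le>Suc n. real (Suc n choose k) * F k x * G (Suc n - k) x)) (at x)"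
    using leibniz_sum[of n "\<lambda>k. F k x" "\<lambda>k. G k x"] by simp
qed


definition gC :: "complex \<Rightarrow> complex" where
  "gC z = exp (- 1 / (1 - z^2))"

definition UC :: "complex set" where
  "UC = {z. 0 < Re (1 - z^2)}"

lemma open_UC: "open UC"
  unfolding UC_def by (intro open_Collect_less continuous_intros)

lemma hol_gC: "gC holomorphic_on UC"
proof -
  have "1 - z^2 \<noteq> 0" if "z \<in> UC" for z using that unfolding UC_def by auto
  then show ?thesis unfolding gC_def[abs_def] by (intro holomorphic_intros) auto
qed

lemma exp_pow_le: fixes x :: real assumes "0 \<le> x" shows "x ^ n / fact n \<le> exp x"
proof -
  have "summable (\<lambda>n. x ^ n / fact n)"
    using summable_exp[of x] by (simp add: field_simps)
  then have "sum (\<lambda>n. x ^ n / fact n) {n} \<le> (\<Sum>n. x ^ n / fact n)"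
    by (rule sum_le_suminf) (use assms in auto)
  also have "\<dots> = exp x" using exp_converges[of x] by (simp add: sums_iff field_simps)
  finally show ?thesis by simp
qed

lemma disk_est:
  fixes p :: real and z :: complex
  assumes p: "\<bar>p\<bar> < 1" and z: "norm (z - of_real p) \<le> (1 - p^2) / 6"
  shows "Re (1 - z^2) \<ge> (1 - p^2) / 2" "norm (1 - z^2) \<le> 3 * (1 - p^2) / 2"
proof -
  define s where "s = 1 - p^2"
  define w where "w = z - of_real p"
  have s0: "0 < s" "s \<le> 1" using p abs_square_less_1[of p] unfolding s_def by auto
  have wle: "norm w \<le> s / 6" using z unfolding w_def s_def by simp
  have eq: "1 - z^2 = of_real s - (2 * of_real p * w + w^2)"
    unfolding w_def s_def by (simp add: algebra_simps power2_eq_square)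
  have "norm (2 * of_real p * w + w^2) \<le> 2 * \<bar>p\<bar> * norm w + norm w ^ 2"
    by (rule order_trans[OF norm_triangle_ineq]) (simp add: norm_mult norm_power)
  also have "\<dots> \<le> 2 * norm w + norm w * norm w"
    using p by (simp add: power2_eq_square mult_right_mono)
  also have "\<dots> \<le> 3 * norm w"
    proof -
    have "norm w * norm w \<le> 1 * norm w" using wle s0 by (intro mult_right_mono) auto
    then show ?thesis by simp
  qed
  also have "\<dots> \<le> s / 2" using wle by simp
  finally have nb: "norm (2 * of_real p * w + w^2) \<le> s / 2" .
  have "Re (2 * of_real p * w + w^2) \<le> s / 2"
    using nb complex_Re_le_cmod order_trans by blast
  then show "Re (1 - z^2) \<ge> (1 - p^2) / 2" unfolding eq s_def[symmetric] by simp
  have "norm (1 - z^2) \<le> norm (of_real s :: complex) + norm (2 * of_real p * w + w^2)"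
    unfolding eq by (rule norm_triangle_ineq4)
  then show "norm (1 - z^2) \<le> 3 * (1 - p^2) / 2" using nb s0 unfolding s_def[symmetric] by simp
qed

lemma gC_disk_bound:
  fixes p :: real and z :: complex
  assumes p: "\<bar>p\<bar> < 1" and z: "norm (z - of_real p) \<le> (1 - p^2) / 6"
  shows "norm (gC z) \<le> exp (- (2/9) / (1 - p^2))"
proof -
  define s where "s = 1 - p^2"
  define u where "u = 1 - z^2"
  have s0: "0 < s" using p abs_square_less_1[of p] unfolding s_def by auto
  have ru: "Re u \<ge> s / 2" and nu: "norm u \<le> 3 * s / 2"
    using disk_est[OF p z] unfolding u_def s_def by auto
  have nu0: "0 < norm u" using ru s0 complex_Re_le_cmod[of u] by linarith
  have "Re (1 / u) = Re u / (norm u)^2" by (simp add: Re_divide')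
  also have "\<dots> \<ge> (s/2) / (3 * s / 2)^2"
    by (rule frac_le) (use ru nu nu0 s0 in \<open>auto intro!: power_mono\<close>)
  finally have "Re (1/u) \<ge> (2/9) / s" using s0 by (simp add: power2_eq_square field_simps)
  then have "Re (- 1 / u) \<le> - (2/9) / s" by simp
  then show ?thesis unfolding gC_def u_def[symmetric] s_def[symmetric] by simp
qed

lemma cball_UC:
  assumes p: "\<bar>p\<bar> < 1" shows "cball (complex_of_real p) ((1 - p^2)/6) \<subseteq> UC"
proof
  fix z assume "z \<in> cball (complex_of_real p) ((1 - p^2)/6)"
  then have "norm (z - of_real p) \<le> (1 - p^2)/6" by (simp add: dist_norm norm_minus_commute)
  from disk_est(1)[OF p this] have "Re (1 - z^2) > 0"
    using p abs_square_less_1[of p] by auto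
  then show "z \<in> UC" unfolding UC_def by simp
qed

lemma gC_deriv_bound:
  assumes p: "\<bar>p\<bar> < 1"
  shows "norm ((deriv ^^ j) gC (of_real p)) \<le> fact j * exp (- (2/9) / (1 - p^2)) / ((1 - p^2)/6)^j"
proof (rule Cauchy_inequality)
  have s0: "0 < 1 - p^2" using p abs_square_less_1[of p] by auto
  then show "0 < (1 - p^2) / 6" by simp
  show "gC holomorphic_on ball (complex_of_real p) ((1 - p\<^sup>2) / 6)"
    using hol_gC cball_UC[OF p] ball_subset_cball holomorphic_on_subset by blast
  show "continuous_on (cball (complex_of_real p) ((1 - p\<^sup>2) / 6)) gC"
    using hol_gC cball_UC[OF p] holomorphic_on_imp_continuous_on continuous_on_subset by blast
  fix x assume "cmod (complex_of_real p - x) = (1 - p\<^sup>2) / 6"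
  then show "cmod (gC x) \<le> exp (- (2 / 9) / (1 - p\<^sup>2))"
    by (intro gC_disk_bound[OF p]) (simp add: norm_minus_commute)
qed


definition E :: "nat \<Rightarrow> real \<Rightarrow> real" where
  "E j p = (if \<bar>p\<bar> < 1 then Re ((deriv ^^ j) gC (of_real p)) else 0)"

lemma s_pos: "\<bar>p::real\<bar> < 1 \<Longrightarrow> 0 < 1 - p^2"
  using abs_square_less_1[of p] by auto

lemma E_bound_m:
  assumes p: "\<bar>p\<bar> < 1"
  shows "\<bar>E j p\<bar> \<le> fact j * fact (j+m) * 27^j * (9/2)^m * (1-p^2)^m"
proof -
  define s where "s = 1 - p^2"
  have s0: "0 < s" using s_pos[OF p] s_def by simp
  have "((2/9)/s)^(j+m) / fact (j+m) \<le> exp ((2/9)/s)"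
    by (rule exp_pow_le) (use s0 in simp)
  then have ex: "exp (- (2/9)/s) \<le> fact (j+m) * (s * (9/2))^(j+m)"
    using s0 by (simp add: exp_minus field_simps power_divide)
  have "\<bar>E j p\<bar> \<le> norm ((deriv ^^ j) gC (of_real p))"
    using p by (simp add: E_def abs_Re_le_cmod)
  also have "\<dots> \<le> fact j * exp (- (2/9) / s) / (s/6)^j"
    using gC_deriv_bound[OF p, of j] s_def by simp
  also have "\<dots> \<le> fact j * (fact (j+m) * (s * (9/2))^(j+m)) / (s/6)^j"
    by (intro divide_right_mono mult_left_mono ex) (use s0 in auto)
  also have "\<dots> = fact j * fact (j+m) * 27^j * (9/2)^m * s^m"
  proof -
    have q: "(s * (9/2)) / (s/6) = 27" using s0 by simp
    have "(s * (9/2))^(j+m) / (s/6)^j = ((s * (9/2)) / (s/6))^j * (s * (9/2))^m"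
      by (simp only: power_add power_divide times_divide_eq_left)
    also have "\<dots> = 27^j * (9/2)^m * s^m" by (simp only: q power_mult_distrib mult_ac)
    finally have e: "(s * (9/2))^(j+m) / (s/6)^j = 27^j * (9/2)^m * s^m" .
    have "fact j * (fact (j+m) * (s * (9/2))^(j+m)) / (s/6)^j
        = fact j * fact (j+m) * ((s * (9/2))^(j+m) / (s/6)^j)" by simp
    then show ?thesis unfolding e by (simp add: ac_simps)
  qed
  finally show ?thesis unfolding s_def .
qed

lemma E_bound: "\<bar>E j p\<bar> \<le> fact j * fact j * 27^j"
proof (cases "\<bar>p\<bar> < 1")
  case True
  then show ?thesis using E_bound_m[OF True, of j 0] by simp
next
  case False
  then show ?thesis by (simp add: E_def)
qed

lemma E_flat:
  assumes "a = 1 \<or> a = -1"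
  shows "\<bar>E j x - E j a\<bar> \<le> (fact j * fact (j+2) * 27^j * (9/2)^2 * 4) * (x - a)^2"
proof -
  define K where "K = fact j * fact (j+2) * 27^j * (9/2::real)^2"
  have K0: "0 \<le> K" unfolding K_def by simp
  have Ea: "E j a = 0" using assms by (auto simp: E_def)
  show ?thesis
  proof (cases "\<bar>x\<bar> < 1")
    case True
    have "\<bar>E j x\<bar> \<le> K * (1 - x^2)^2" using E_bound_m[OF True, of j 2] unfolding K_def by simp
    also have "(1 - x^2)^2 \<le> 4 * (x - a)^2"
    proof -
      have "1 - x^2 = (1 - x) * (1 + x)" by (simp add: algebra_simps power2_eq_square)
      then have "\<bar>1 - x^2\<bar> = \<bar>1 - x\<bar> * \<bar>1 + x\<bar>" by (simp add: abs_mult)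
      moreover have "\<bar>1 - x\<bar> * \<bar>1 + x\<bar> \<le> 2 * \<bar>x - a\<bar>"
      proof (cases "a = 1")
        case True
        have "\<bar>1 - x\<bar> * \<bar>1 + x\<bar> \<le> \<bar>1 - x\<bar> * 2"
          using \<open>\<bar>x\<bar> < 1\<close> by (intro mult_left_mono) auto
        then show ?thesis using True by (simp add: abs_minus_commute)
      next
        case False
        then have a: "a = -1" using assms by auto
        have "\<bar>1 - x\<bar> * \<bar>1 + x\<bar> \<le> 2 * \<bar>1 + x\<bar>"
          using \<open>\<bar>x\<bar> < 1\<close> by (intro mult_right_mono) auto
        then show ?thesis using a by (simp add: add.commute)
      qed
      ultimately have "\<bar>1 - x^2\<bar> \<le> 2 * \<bar>x - a\<bar>" by simp
      then have "\<bar>1 - x^2\<bar>^2 \<le> (2 * \<bar>x - a\<bar>)^2" by (intro power_mono) auto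
      then show ?thesis by (simp add: power_mult_distrib)
    qed
    then have "K * (1 - x^2)^2 \<le> K * (4 * (x-a)^2)" using K0 by (intro mult_left_mono) auto
    finally show ?thesis using Ea unfolding K_def by (simp add: mult.assoc)
  next
    case False
    then show ?thesis using Ea by (simp add: E_def)
  qed
qed

lemma quad_deriv0:
  fixes f :: "real \<Rightarrow> real"
  assumes "\<And>x. \<bar>f x - f a\<bar> \<le> K * (x - a)^2"
  shows "(f has_real_derivative 0) (at a)"
proof -
  have "((\<lambda>x. (f x - f a) / (x - a)) \<longlongrightarrow> 0) (at a)"
  proof (rule Lim_null_comparison)
    show "\<forall>\<^sub>F x in at a. norm ((f x - f a) / (x - a)) \<le> K * \<bar>x - a\<bar>"
    proof (rule always_eventually, rule allI)
      fix x
      show "norm ((f x - f a) / (x - a)) \<le> K * \<bar>x - a\<bar>"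
      proof (cases "x = a")
        case True then show ?thesis by simp
      next
        case False
        have "\<bar>f x - f a\<bar> \<le> (K * \<bar>x - a\<bar>) * \<bar>x - a\<bar>" using assms[of x] by (simp add: power2_eq_square)
        then show ?thesis using False by (simp add: divide_le_eq)
      qed
    qed
    show "((\<lambda>x. K * \<bar>x - a\<bar>) \<longlongrightarrow> 0) (at a)"
      by (rule tendsto_eq_intros refl | simp)+
  qed
  then show ?thesis by (simp add: has_field_derivative_iff)
qed

lemma E_deriv: "(E j has_real_derivative E (Suc j) p) (at p)"
proof -
  consider "\<bar>p\<bar> < 1" | "\<bar>p\<bar> > 1" | "p = 1 \<or> p = -1" by linarith
  then show ?thesis
  proof cases
    case 1
    have hd: "(deriv ^^ j) gC holomorphic_on UC"
      by (rule holomorphic_higher_deriv[OF hol_gC open_UC])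
    have mem: "complex_of_real p \<in> UC" using cball_UC[OF 1] s_pos[OF 1] by auto
    have "((deriv ^^ j) gC has_field_derivative deriv ((deriv ^^ j) gC) (of_real p)) (at (of_real p))"
      by (rule holomorphic_derivI[OF hd open_UC mem])
    then have "((\<lambda>x. (deriv ^^ j) gC (of_real x)) has_vector_derivative (deriv ^^ Suc j) gC (of_real p)) (at p)"
      by (intro has_vector_derivative_real_field) simp
    then have d: "((\<lambda>x. Re ((deriv ^^ j) gC (of_real x))) has_real_derivative Re ((deriv ^^ Suc j) gC (of_real p))) (at p)"
      by (rule has_field_derivative_Re)
    have v: "E (Suc j) p = Re ((deriv ^^ Suc j) gC (of_real p))" using 1 by (simp add: E_def)
    show ?thesis unfolding v
    proof (rule has_field_derivative_transform_within_open[OF d, of "{-1<..<1}"])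
      show "open {-1<..<(1::real)}" by simp
      show "p \<in> {-1<..<1}" using 1 by auto
      show "\<And>x. x \<in> {-1<..<1} \<Longrightarrow> Re ((deriv ^^ j) gC (of_real x)) = E j x"
        by (auto simp: E_def)
    qed
  next
    case 2
    have d: "((\<lambda>x. 0) has_real_derivative 0) (at p)" by simp
    have v: "E (Suc j) p = 0" using 2 by (simp add: E_def)
    show ?thesis unfolding v
    proof (rule has_field_derivative_transform_within_open[OF d, of "{x. \<bar>x\<bar> > 1}"])
      show "open {x::real. \<bar>x\<bar> > 1}" by (intro open_Collect_less continuous_intros)
    qed (use 2 in \<open>auto simp: E_def\<close>)
  next
    case 3
    have "E (Suc j) p = 0" using 3 by (auto simp: E_def)
    moreover have "(E j has_real_derivative 0) (at p)"
      by (rule quad_deriv0, rule E_flat[OF 3])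
    ultimately show ?thesis by simp
  qed
qed

lemma dseq_E: "dseq E"
  unfolding dseq_def using E_deriv by blast

definition eta0 :: "real \<Rightarrow> real" where
  "eta0 p = (if \<bar>p\<bar> < 1 then exp (1 / (p^2 - 1)) else 0)"

lemma E0: "E 0 = eta0"
proof
  fix p
  have "gC (of_real p) = of_real (exp (1 / (p^2 - 1)))"
  proof -
    have "- (1 / (1 - (complex_of_real p)^2)) = 1 / ((complex_of_real p)^2 - 1)"
      by (metis minus_diff_eq divide_minus_right)
    then show ?thesis unfolding gC_def by (simp add: exp_of_real[symmetric])
  qed
  then show "E 0 p = eta0 p" by (simp add: E_def eta0_def)
qed

lemma eta0_nonneg: "eta0 p \<ge> 0" by (simp add: eta0_def)
lemma eta0_pos: "\<bar>p\<bar> < 1 \<Longrightarrow> eta0 p > 0" by (simp add: eta0_def)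
lemma eta0_zero: "\<bar>p\<bar> \<ge> 1 \<Longrightarrow> eta0 p = 0" by (simp add: eta0_def)
lemma eta0_deriv: "(eta0 has_real_derivative E 1 p) (at p)"
  using E_deriv[of 0 p] E0 by simp
lemma eta0_cont: "continuous_on S eta0"
  using dseq_cont[OF dseq_E, of S 0] E0 by simp


definition Phi0 :: "real \<Rightarrow> real" where
  "Phi0 x = integral {-2..x} eta0"

lemma Phi0_zero: assumes "x \<le> -1" shows "Phi0 x = 0"
proof -
  have "integral {-2..x} eta0 = integral {-2..x} (\<lambda>_. 0::real)"
    by (rule integral_cong) (use assms in \<open>auto intro!: eta0_zero\<close>)
  then show ?thesis by (simp add: Phi0_def)
qed

lemma Phi0_deriv: "(Phi0 has_real_derivative eta0 x) (at x)"
proof (cases "x < -1")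
  case True
  have d: "((\<lambda>_. 0) has_real_derivative 0) (at x)" by simp
  have v: "eta0 x = 0" using True by (intro eta0_zero) auto
  show ?thesis unfolding v
    by (rule has_field_derivative_transform_within_open[OF d, of "{..<-1}"])
       (use True Phi0_zero in auto)
next
  case False
  have "(Phi0 has_real_derivative eta0 x) (at x within {-2..x+1})"
    unfolding Phi0_def[abs_def]
    by (rule integral_has_real_derivative) (use False eta0_cont in auto)
  moreover have "at x within {-2..x+1} = at x"
    by (rule at_within_interior) (use False in auto)
  ultimately show ?thesis by simp
qed

lemma eta0_integrable: "eta0 integrable_on {a..b}"
  by (rule integrable_continuous_interval, rule eta0_cont)

lemma C_eta_eq: "C_eta = integral {-1..1} eta0"
proof -
  have "C_eta = integral {-1<..<1} (\<lambda>p. exp (1 / (p^2 - 1)))"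
    unfolding C_eta_def by (rule integral_open_interval_real)
  also have "\<dots> = integral {-1<..<1} eta0"
    by (rule integral_cong) (auto simp: eta0_def)
  also have "\<dots> = integral {-1..1} eta0"
    by (rule integral_open_interval_real[symmetric])
  finally show ?thesis .
qed

lemma Phi0_one: assumes "x \<ge> 1" shows "Phi0 x = C_eta"
proof -
  have "integral {-2..-1} eta0 + integral {-1..x} eta0 = integral {-2..x} eta0"
    using Henstock_Kurzweil_Integration.integral_combine[where a="-2" and c="-1" and b=x and f=eta0] assms eta0_integrable by auto
  moreover have "integral {-1..1} eta0 + integral {1..x} eta0 = integral {-1..x} eta0"
    using Henstock_Kurzweil_Integration.integral_combine[where a="-1" and c=1 and b=x and f=eta0] assms eta0_integrable by auto
  moreover have "integral {1..x} eta0 = integral {1..x} (\<lambda>_. 0::real)"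
    by (rule integral_cong) (auto intro!: eta0_zero)
  moreover have "integral {-2..-1} eta0 = 0" using Phi0_zero[of "-1"] by (simp add: Phi0_def)
  ultimately show ?thesis by (simp add: Phi0_def C_eta_eq)
qed

lemma Phi0_mono: assumes "x \<le> y" shows "Phi0 x \<le> Phi0 y"
  by (rule DERIV_nonneg_imp_nondecreasing[OF assms]) (use Phi0_deriv eta0_nonneg in blast)

lemma C_eta_pos: "C_eta > 0"
proof -
  have "Phi0 (-1/2) < Phi0 (1/2)"
    by (rule DERIV_pos_imp_increasing) (use Phi0_deriv eta0_pos in force)+
  moreover have "Phi0 (-1) \<le> Phi0 (-1/2)" "Phi0 (1/2) \<le> Phi0 1" by (auto intro!: Phi0_mono)
  ultimately show ?thesis using Phi0_zero[of "-1"] Phi0_one[of 1] by simp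
qed

lemma Phi0_range: "0 \<le> Phi0 x \<and> Phi0 x \<le> C_eta"
proof -
  have "Phi0 (min x (-1)) \<le> Phi0 x" "Phi0 x \<le> Phi0 (max x 1)" by (auto intro!: Phi0_mono)
  moreover have "Phi0 (min x (-1)) = 0" by (rule Phi0_zero) simp
  moreover have "Phi0 (max x 1) = C_eta" by (rule Phi0_one) simp
  ultimately show ?thesis by simp
qed

lemma eta_eq: "eta p = eta0 p / C_eta"
  by (simp add: eta_def eta0_def)

lemma eta_d_eq: "eta_d d p = eta0 (p / d) / (C_eta * d)"
  by (simp add: eta_d_def eta_eq)

definition Phi :: "real \<Rightarrow> real \<Rightarrow> real" where
  "Phi d x = Phi0 (x / d) / C_eta"

lemma Phi_deriv: assumes dnz: "d \<noteq> 0" shows "(Phi d has_real_derivative eta_d d x) (at x)"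
proof -
  have "((\<lambda>x. Phi0 (x / d)) has_real_derivative eta0 (x/d) * (1/d)) (at x)"
    by (rule DERIV_chain2[OF Phi0_deriv]) (use dnz in \<open>auto intro!: derivative_eq_intros\<close>)
  then have "((\<lambda>x. Phi0 (x / d) / C_eta) has_real_derivative eta0 (x/d) * (1/d) / C_eta) (at x)"
    by (rule DERIV_cdivide)
  then show ?thesis unfolding Phi_def[abs_def] eta_d_eq using dnz by (simp add: field_simps)
qed

lemma Phi_range: "0 \<le> Phi d x \<and> Phi d x \<le> 1"
  using Phi0_range[of "x/d"] C_eta_pos by (simp add: Phi_def)

lemma Phi_low: "d > 0 \<Longrightarrow> x \<le> -d \<Longrightarrow> Phi d x = 0"
  by (simp add: Phi_def Phi0_zero divide_le_eq)

lemma Phi_high: "d > 0 \<Longrightarrow> x \<ge> d \<Longrightarrow> Phi d x = 1"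
  using C_eta_pos by (simp add: Phi_def Phi0_one le_divide_eq)

lemma zeta_eq:
  assumes that: "-1 - d \<le> R + d" and dnz: "d \<noteq> 0"
  shows "zeta R d p = Phi d (p + 1 + d) - Phi d (p - R - d)"
proof -
  have "zeta R d p = integral UNIV (\<lambda>y. if y \<in> {-1-d<..<R+d} then eta_d d (p - y) else 0)"
    unfolding zeta_def by (rule arg_cong[where f="integral UNIV"]) (auto simp: indicator_def)
  also have "\<dots> = integral {-1-d<..<R+d} (\<lambda>y. eta_d d (p - y))"
    by (rule integral_restrict_UNIV)
  also have "\<dots> = integral {-1-d..R+d} (\<lambda>y. eta_d d (p - y))"
    by (rule integral_open_interval_real[symmetric])
  also have "\<dots> = (- Phi d (p - (R + d))) - (- Phi d (p - (-1-d)))"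
  proof (rule integral_unique, rule fundamental_theorem_of_calculus[OF that])
    fix y
    have "((\<lambda>y. - Phi d (p - y)) has_real_derivative - (eta_d d (p - y) * (-1))) (at y)"
      by (intro DERIV_minus DERIV_chain2[OF Phi_deriv[OF dnz]]) (auto intro!: derivative_eq_intros)
    then show "((\<lambda>y. - Phi d (p - y)) has_vector_derivative eta_d d (p - y)) (at y within {-1 - d..R + d})"
      by (simp add: has_real_derivative_iff_has_vector_derivative has_vector_derivative_at_within)
  qed
  finally show ?thesis by (simp add: algebra_simps)
qed

definition H :: "real \<Rightarrow> nat \<Rightarrow> real \<Rightarrow> real" where
  "H d k x = 1 / (C_eta * d) * ((1/d)^k * E k ((1/d) * x + 0))"

lemma dseq_H: "dseq (H d)"
  unfolding H_def[abs_def] by (intro dseq_cmult dseq_affine dseq_E)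

lemma H0: "H d 0 x = eta_d d x"
  by (simp add: H_def eta_d_eq E0)

definition Zs :: "real \<Rightarrow> real \<Rightarrow> nat \<Rightarrow> real \<Rightarrow> real" where
  "Zs R d k x = 1^k * H d k (1 * x + (1 + d)) - 1^k * H d k (1 * x + (- R - d))"

lemma dseq_Zs: "dseq (Zs R d)"
  unfolding Zs_def[abs_def] by (intro dseq_diff dseq_affine dseq_H)

definition Z :: "real \<Rightarrow> real \<Rightarrow> nat \<Rightarrow> real \<Rightarrow> real" where
  "Z R d k = (case k of 0 \<Rightarrow> zeta R d | Suc j \<Rightarrow> Zs R d j)"

lemma zeta_deriv:
  assumes "-1 - d \<le> R + d" and dnz: "d \<noteq> 0"
  shows "(zeta R d has_real_derivative Zs R d 0 x) (at x)"
proof -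
  have e: "zeta R d = (\<lambda>p. Phi d (p + 1 + d) - Phi d (p - R - d))"
    using zeta_eq[OF assms] by blast
  have "((\<lambda>p. Phi d (p + 1 + d) - Phi d (p - R - d)) has_real_derivative
      eta_d d (x + 1 + d) * 1 - eta_d d (x - R - d) * 1) (at x)"
    by (intro DERIV_diff DERIV_chain2[OF Phi_deriv[OF dnz]]) (auto intro!: derivative_eq_intros)
  then show ?thesis unfolding e by (simp add: Zs_def H0 algebra_simps)
qed

lemma dseq_Z: "-1 - d \<le> R + d \<Longrightarrow> d \<noteq> 0 \<Longrightarrow> dseq (Z R d)"
  unfolding Z_def[abs_def] by (intro dseq_cons zeta_deriv dseq_Zs)

definition Dp :: "real \<Rightarrow> real \<Rightarrow> nat \<Rightarrow> real \<Rightarrow> real" where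
  "Dp R d n x = (\<Sum>k\<le>n. real (n choose k) * Z R d k x * ((-1)^(n-k) * exp (- x)))"

lemma dseq_Dp: "-1 - d \<le> R + d \<Longrightarrow> d \<noteq> 0 \<Longrightarrow> dseq (Dp R d)"
  unfolding Dp_def[abs_def] by (rule dseq_mult[OF dseq_Z dseq_expneg])

lemma Dp0: "Dp R (real r) 0 = psi R r"
  by (rule ext) (simp add: Dp_def psi_def Z_def)


lemma E_zero: "\<bar>y\<bar> \<ge> 1 \<Longrightarrow> E k y = 0" by (simp add: E_def)

lemma H_zero: assumes "d > 0" "\<bar>x\<bar> \<ge> d" shows "H d k x = 0"
proof -
  have "\<bar>(1/d) * x + 0\<bar> \<ge> 1" using assms by (simp add: abs_divide le_divide_eq)
  then show ?thesis by (simp add: H_def E_zero)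
qed

lemma H_bound: assumes "d \<ge> 1" shows "\<bar>H d k x\<bar> \<le> fact k * fact k * 27^k / C_eta"
proof -
  have C: "C_eta > 0" by (rule C_eta_pos)
  have a1: "\<bar>1 / (C_eta * d)\<bar> \<le> 1 / C_eta" using assms C by (simp add: field_simps)
  have a2: "\<bar>(1/d)^k\<bar> \<le> 1" using assms by (simp add: power_le_one)
  have "\<bar>H d k x\<bar> = \<bar>1 / (C_eta * d)\<bar> * (\<bar>(1/d)^k\<bar> * \<bar>E k ((1/d) * x + 0)\<bar>)"
    by (simp add: H_def abs_mult)
  also have "\<dots> \<le> (1 / C_eta) * (1 * (fact k * fact k * 27^k))"
    by (intro mult_mono a1 a2 E_bound) (use C in auto)
  finally show ?thesis by simp
qed

lemma Zs_bound: assumes "d \<ge> 1" shows "\<bar>Zs R d k x\<bar> \<le> 2 * (fact k * fact k * 27^k / C_eta)"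
  using H_bound[OF assms, of k "x + (1 + d)"] H_bound[OF assms, of k "x + (- R - d)"]
  by (simp add: Zs_def)

lemma Zs_zero: assumes "d > 0" "R > 0" "x \<le> -1 - 2*d \<or> x \<ge> R + 2*d" shows "Zs R d k x = 0"
proof -
  have "H d k (x + (1 + d)) = 0" "H d k (x + (- R - d)) = 0"
    using assms by (auto intro!: H_zero)
  then show ?thesis by (simp add: Zs_def)
qed

lemma zeta_props:
  assumes "d > 0" "R > 0"
  shows "\<bar>zeta R d x\<bar> \<le> 1" and "x \<le> -1 - 2*d \<or> x \<ge> R + 2*d \<Longrightarrow> zeta R d x = 0"
    and "x \<in> {-1<..<R} \<Longrightarrow> zeta R d x = 1"
proof -
  have e: "zeta R d x = Phi d (x + 1 + d) - Phi d (x - R - d)"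
    by (rule zeta_eq) (use assms in auto)
  show "\<bar>zeta R d x\<bar> \<le> 1" unfolding e using Phi_range[of d "x+1+d"] Phi_range[of d "x-R-d"] by auto
  show "x \<le> -1 - 2*d \<or> x \<ge> R + 2*d \<Longrightarrow> zeta R d x = 0"
    unfolding e using assms by (auto simp: Phi_low Phi_high)
  show "x \<in> {-1<..<R} \<Longrightarrow> zeta R d x = 1"
    unfolding e using assms by (auto simp: Phi_low Phi_high)
qed

lemma Z_zero: assumes "d > 0" "R > 0" "x \<le> -1 - 2*d \<or> x \<ge> R + 2*d" shows "Z R d k x = 0"
  using assms zeta_props(2)[OF assms(1,2)] Zs_zero[OF assms] by (auto simp: Z_def split: nat.splits)

definition Qc :: real where "Qc = max 1 (2 / C_eta)"

lemma Qc_ge: "Qc \<ge> 1" by (simp add: Qc_def)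

lemma fact_le_rr: assumes "j < r" shows "fact j \<le> real r ^ r"
proof -
  have "fact j \<le> real (j ^ j)" by (rule fact_le_power)
  also have "\<dots> = real j ^ j" by simp
  also have "\<dots> \<le> real r ^ j" by (rule power_mono) (use assms in auto)
  also have "\<dots> \<le> real r ^ r" by (rule power_increasing) (use assms in auto)
  finally show ?thesis .
qed

lemma Z_bound:
  assumes "R > 0" "r \<ge> 1" "k \<le> r"
  shows "\<bar>Z R (real r) k x\<bar> \<le> Qc * (27 * real r ^ 2) ^ r"
proof -
  have big: "1 \<le> (27 * real r ^ 2) ^ r"
  proof (intro one_le_power)
    have "1 \<le> real r ^ 2" using assms by (simp add: one_le_power)
    then show "1 \<le> 27 * real r ^ 2" by linarith
  qed
  show ?thesis
  proof (cases k)
    case 0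
    have "\<bar>Z R (real r) k x\<bar> \<le> 1" using zeta_props(1)[of "real r" R x] assms 0 by (simp add: Z_def)
    also have "1 \<le> Qc * (27 * real r ^ 2) ^ r" using Qc_ge big by (metis mult_mono' mult.right_neutral zero_le_one order_trans)
    finally show ?thesis .
  next
    case (Suc j)
    then have j: "j < r" using assms by simp
    have "\<bar>Z R (real r) k x\<bar> \<le> 2 * (fact j * fact j * 27^j / C_eta)"
      using Zs_bound[of "real r" R j x] assms Suc by (simp add: Z_def)
    also have "\<dots> = (2 / C_eta) * (fact j * fact j * 27^j)" by simp
    also have "\<dots> \<le> Qc * (real r ^ r * real r ^ r * 27 ^ r)"
    proof (rule mult_mono)
      show "2 / C_eta \<le> Qc" by (simp add: Qc_def)
      show "fact j * fact j * 27^j \<le> real r ^ r * real r ^ r * (27::real) ^ r"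
        by (intro mult_mono fact_le_rr j power_increasing) (use j in auto)
    qed (use Qc_ge in auto)
    also have "\<dots> = Qc * (27 * real r ^ 2) ^ r"
      by (simp add: power_mult_distrib power_mult[symmetric] power2_eq_square mult_ac)
    finally show ?thesis .
  qed
qed

lemma Dp_bound:
  assumes "R > 0" "r \<ge> 1"
  shows "\<bar>Dp R (real r) r x\<bar> \<le> 2^r * Qc * (27 * real r ^ 2) ^ r * exp (- x)"
proof -
  have "\<bar>Dp R (real r) r x\<bar> \<le> (\<Sum>k\<le>r. \<bar>real (r choose k) * Z R (real r) k x * ((-1)^(r-k) * exp (- x))\<bar>)"
    unfolding Dp_def by (rule sum_abs)
  also have "\<dots> \<le> (\<Sum>k\<le>r. real (r choose k) * (Qc * (27 * real r ^ 2) ^ r * exp (- x)))"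
  proof (rule sum_mono)
    fix k assume "k \<in> {..r}"
    then have "\<bar>Z R (real r) k x\<bar> \<le> Qc * (27 * real r ^ 2) ^ r" using Z_bound assms by auto
    then have "\<bar>Z R (real r) k x\<bar> * exp (- x) \<le> Qc * (27 * real r ^ 2) ^ r * exp (- x)"
      by (rule mult_right_mono) simp
    then show "\<bar>real (r choose k) * Z R (real r) k x * ((-1)^(r-k) * exp (- x))\<bar>
        \<le> real (r choose k) * (Qc * (27 * real r ^ 2) ^ r * exp (- x))"
      by (simp add: abs_mult mult_left_mono mult.assoc)
  qed
  also have "\<dots> = (\<Sum>k\<le>r. real (r choose k)) * (Qc * (27 * real r ^ 2) ^ r * exp (- x))"
    by (simp add: sum_distrib_right)
  also have "(\<Sum>k\<le>r. real (r choose k)) = 2^r"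
    using choose_row_sum[of r] by (metis of_nat_numeral of_nat_power of_nat_sum)
  finally show ?thesis by (simp add: mult_ac)
qed


lemma powr_final:
  fixes X Q Y :: real and r :: nat
  assumes "0 \<le> X" "X \<le> Q * Y ^ r" "Q \<ge> 1" "Y > 0" "r \<ge> 1"
  shows "X powr (1 / real r) \<le> Q * Y"
proof -
  have "X powr (1 / real r) \<le> (Q * Y ^ r) powr (1 / real r)"
    by (rule powr_mono2) (use assms in auto)
  also have "\<dots> = Q powr (1 / real r) * (Y ^ r) powr (1 / real r)"
    by (rule powr_mult)
  also have "(Y ^ r) powr (1 / real r) = Y"
  proof -
    have "(Y ^ r) powr (1 / real r) = (Y powr real r) powr (1 / real r)"
      using assms by (simp add: powr_realpow)
    also have "\<dots> = Y powr (real r * (1 / real r))" by (rule powr_powr)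
    also have "\<dots> = Y" using assms by simp
    finally show ?thesis .
  qed
  also have "Q powr (1 / real r) \<le> Q powr 1"
    by (rule powr_mono) (use assms in auto)
  finally show ?thesis using assms by (simp add: mult_right_mono)
qed

theorem mainTheorem2:
  shows "\<exists>C>0. \<forall>R>0. \<forall>r::nat. r \<ge> 1 \<longrightarrow>
     smooth_real (psi R r)
   \<and> supp_real (psi R r) \<subseteq> {-(1 + 2 * real r) .. R + 2 * real r}
   \<and> (\<forall>p\<in>{-1<..<R}. psi R r p = exp (- p))
   \<and> (\<lambda>p. ((deriv ^^ r) (psi R r) p)^2) integrable_on UNIV
   \<and> (sqrt (integral UNIV (\<lambda>p. ((deriv ^^ r) (psi R r) p)^2))) powr (1 / real r)
        \<le> C * (real r)^2"
proof (intro exI[of _ "Qc * (54 * exp 3)"] conjI allI impI)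
  show "0 < Qc * (54 * exp 3)" using Qc_ge by simp
  fix R :: real and r :: nat
  assume R: "R > 0" and r: "r \<ge> 1"
  define d where "d = real r"
  have d1: "d \<ge> 1" using r by (simp add: d_def)
  have cond: "-1 - d \<le> R + d" "d \<noteq> 0" using R d1 by auto
  have ds: "dseq (Dp R d)" by (rule dseq_Dp[OF cond])
  have D0: "Dp R d 0 = psi R r" unfolding d_def by (rule Dp0)
  have dr: "(deriv ^^ r) (psi R r) = Dp R d r"
    using dseq_deriv[OF ds, of r] D0 by simp
  show "smooth_real (psi R r)" using dseq_smooth[OF ds] D0 by simp
  define lo where "lo = -(1 + 2 * real r)"
  define hi where "hi = R + 2 * real r"
  have lohi: "lo \<le> hi" using R by (simp add: lo_def hi_def)
  have Zz: "Z R d k p = 0" if "p \<notin> {lo<..<hi}" for k p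
    by (rule Z_zero) (use that R d1 in \<open>auto simp: lo_def hi_def d_def\<close>)
  show "supp_real (psi R r) \<subseteq> {-(1 + 2 * real r) .. R + 2 * real r}"
    unfolding supp_real_def
  proof (rule closure_minimal)
    show "{p. psi R r p \<noteq> 0} \<subseteq> {- (1 + 2 * real r)..R + 2 * real r}"
    proof
      fix p assume "p \<in> {p. psi R r p \<noteq> 0}"
      then have "Z R d 0 p \<noteq> 0" by (simp add: psi_def Z_def d_def)
      then have "p \<in> {lo<..<hi}" using Zz by blast
      then show "p \<in> {- (1 + 2 * real r)..R + 2 * real r}" by (auto simp: lo_def hi_def)
    qed
  qed simp
  show "\<forall>p\<in>{-1<..<R}. psi R r p = exp (- p)"
    using zeta_props(3)[of d R] R d1 by (simp add: psi_def d_def)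
  define f where "f = (\<lambda>p. (Dp R d r p)^2)"
  have Dz: "Dp R d r p = 0" if "p \<notin> {lo..hi}" for p
    using that Zz by (auto simp: Dp_def)
  have fif: "f = (\<lambda>p. if p \<in> {lo..hi} then f p else 0)"
    by (rule ext) (auto simp: f_def Dz)
  have fcont: "continuous_on {lo..hi} f"
    unfolding f_def by (intro continuous_intros dseq_cont[OF ds])
  have fint: "f integrable_on {lo..hi}" by (rule integrable_continuous_interval[OF fcont])
  show "(\<lambda>p. ((deriv ^^ r) (psi R r) p)^2) integrable_on UNIV"
    unfolding dr f_def[symmetric] by (subst fif) (rule iffD2[OF integrable_restrict_UNIV fint])
  have IU: "integral UNIV f = integral {lo..hi} f"
    by (subst fif) (rule integral_restrict_UNIV)
  define M where "M = 2^r * Qc * (27 * real r ^ 2) ^ r"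
  have M0: "M \<ge> 0" using Qc_ge by (simp add: M_def)
  have fle: "f p \<le> M^2 * exp (-2 * p)" for p
  proof -
    have "\<bar>Dp R d r p\<bar> \<le> M * exp (- p)" using Dp_bound[OF R r, of p] by (simp add: M_def d_def)
    then have "\<bar>Dp R d r p\<bar>^2 \<le> (M * exp (- p))^2" by (rule power_mono) simp
    also have "\<dots> = M^2 * exp (-2 * p)"
      using exp_double[of "-p"] by (simp add: power_mult_distrib)
    finally show ?thesis by (simp add: f_def)
  qed
  define Fp where "Fp = (\<lambda>p. - (M^2 * exp (-2 * p) / 2))"
  have eint: "((\<lambda>p. M^2 * exp (-2 * p)) has_integral (Fp hi - Fp lo)) {lo..hi}"
  proof (rule fundamental_theorem_of_calculus[OF lohi])
    fix x
    have "(Fp has_real_derivative M^2 * exp (-2 * x)) (at x)"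
      unfolding Fp_def by (auto intro!: derivative_eq_intros)
    then show "(Fp has_vector_derivative M^2 * exp (-2 * x)) (at x within {lo..hi})"
      by (simp add: has_real_derivative_iff_has_vector_derivative has_vector_derivative_at_within)
  qed
  have "integral {lo..hi} f \<le> integral {lo..hi} (\<lambda>p. M^2 * exp (-2 * p))"
    by (rule integral_le[OF fint]) (use eint fle in \<open>auto simp: has_integral_integrable\<close>)
  also have "\<dots> = Fp hi - Fp lo"
    by (rule integral_unique[OF eint])
  also have "\<dots> \<le> M^2 * exp (-2 * lo)"
  proof -
    have a: "0 \<le> M^2 * exp (-2 * hi)" "0 \<le> M^2 * exp (-2 * lo)" by auto
    show ?thesis unfolding Fp_def using a by linarith
  qed
  also have "\<dots> = (M * exp (- lo))^2"
    using exp_double[of "-lo"] by (simp add: power_mult_distrib)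
  finally have Ile: "integral UNIV f \<le> (M * exp (- lo))^2" using IU by simp
  have I0: "0 \<le> integral UNIV f"
    unfolding IU by (rule integral_nonneg[OF fint]) (simp add: f_def)
  have X: "sqrt (integral UNIV f) \<le> M * exp (- lo)"
    using real_sqrt_le_mono[OF Ile] M0 by simp
  have "M * exp (- lo) \<le> Qc * (54 * exp 3 * real r ^ 2) ^ r"
  proof -
    have "exp (- lo) \<le> exp (real r * 3)" using r by (simp add: lo_def)
    also have "\<dots> = exp 3 ^ r" by (rule exp_of_nat_mult)
    finally have "M * exp (- lo) \<le> M * exp 3 ^ r" using M0 by (simp add: mult_left_mono)
    also have "\<dots> = Qc * (54 * exp 3 * real r ^ 2) ^ r"
    proof -
      have "(2::real)^r * 27^r = 54^r" by (simp flip: power_mult_distrib)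
      then show ?thesis by (simp add: M_def power_mult_distrib mult_ac)
    qed
    finally show ?thesis .
  qed
  then have X': "sqrt (integral UNIV f) \<le> Qc * (54 * exp 3 * real r ^ 2) ^ r" using X by simp
  have "sqrt (integral UNIV f) powr (1 / real r) \<le> Qc * (54 * exp 3 * real r ^ 2)"
    by (rule powr_final[OF _ X' Qc_ge _ r]) (use I0 r in auto)
  then show "(sqrt (integral UNIV (\<lambda>p. ((deriv ^^ r) (psi R r) p)^2))) powr (1 / real r)
        \<le> Qc * (54 * exp 3) * (real r)^2"
    unfolding dr f_def[symmetric] by (simp add: mult_ac)
qed

end
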